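(* Let $(\mathcal{A},v)$ be a valued abelian group and $A_1,\dots,A_n$ subgroups of $\mathcal{A}$ such that each $(A_i,v|_{A_i})$ is spherically complete. If the sum $A_1+\dots+A_n\subseteq\mathcal{A}$ is pseudo-direct, then $(A_1+\dots+A_n, v)$ is spherically complete.
   Context: A valued abelian group $(A,v)$ is an abelian group $A$ with a map $v:A\to \Gamma\cup\{\infty\}$, $a\mapsto va$, onto a totally ordered set with largest element $\infty$, such that $va=\infty\iff a=0$ and $v(a-a')\ge\min\{va,va'\}$ for all $a,a'\in A$. For $a\in A$ and $\alpha\in v(A)$ the ball is $B_\alpha(a)=\{a'\in A\mid v(a-a')\ge\alpha\}$. A nest of balls is a set of balls totally ordered by inclusion; $(A,v)$ is spherically complete if every nest of balls has nonempty intersection. The sum $A_1+\dots+A_n$ of subgroups of $(\mathcal{A},v)$ is pseudo-direct if for every nonzero $a\in A_1+\dots+A_n$ there are $a_i\in A_i$ ($1\le i\le n$) with $v\sum_{i=1}^n a_i=\min_{1\le i\le n}va_i$ and $v\big(a-\sum_{i=1}^n a_i\big)>va$. *)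

theory Defs
  imports Main
begin

text \<open>A valued abelian group: the ambient group is the type 'a; the value set
  \<Gamma> \<union> {\<infinity>} is a linearly ordered type 'g whose top element plays the role of \<infinity>.\<close>
definition valued_group :: "('a::ab_group_add \<Rightarrow> 'g::{linorder,order_top}) \<Rightarrow> bool" where
  "valued_group v \<longleftrightarrow> (\<forall>a. v a = top \<longleftrightarrow> a = 0) \<and> (\<forall>a a'. v (a - a') \<ge> min (v a) (v a'))"

definition subgrp :: "'a::ab_group_add set \<Rightarrow> bool" where
  "subgrp A \<longleftrightarrow> 0 \<in> A \<and> (\<forall>x\<in>A. \<forall>y\<in>A. x + y \<in> A) \<and> (\<forall>x\<in>A. - x \<in> A)"

definition ball_in :: "('a::ab_group_add \<Rightarrow> 'g::linorder) \<Rightarrow> 'a set \<Rightarrow> 'g \<Rightarrow> 'a \<Rightarrow> 'a set" where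
  "ball_in v S \<alpha> a = {a' \<in> S. v (a - a') \<ge> \<alpha>}"

definition balls_in :: "('a::ab_group_add \<Rightarrow> 'g::linorder) \<Rightarrow> 'a set \<Rightarrow> 'a set set" where
  "balls_in v S = {ball_in v S \<alpha> a | \<alpha> a. a \<in> S \<and> \<alpha> \<in> v ` S}"

definition nest_in :: "('a::ab_group_add \<Rightarrow> 'g::linorder) \<Rightarrow> 'a set \<Rightarrow> 'a set set \<Rightarrow> bool" where
  "nest_in v S N \<longleftrightarrow> N \<subseteq> balls_in v S \<and> (\<forall>B\<in>N. \<forall>C\<in>N. B \<subseteq> C \<or> C \<subseteq> B)"

text \<open>(S, v|S) is spherically complete: every nest of balls has nonempty intersection
  (intersection taken inside S, so the empty nest has intersection S).\<close>
definition spherically_complete :: "('a::ab_group_add \<Rightarrow> 'g::linorder) \<Rightarrow> 'a set \<Rightarrow> bool" where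
  "spherically_complete v S \<longleftrightarrow> (\<forall>N. nest_in v S N \<longrightarrow> S \<inter> \<Inter>N \<noteq> {})"

definition sum_subgrps :: "nat \<Rightarrow> (nat \<Rightarrow> 'a::ab_group_add set) \<Rightarrow> 'a set" where
  "sum_subgrps n A = {\<Sum>i=1..n. a i | a. \<forall>i\<in>{1..n}. a i \<in> A i}"

definition pseudo_direct :: "('a::ab_group_add \<Rightarrow> 'g::linorder) \<Rightarrow> nat \<Rightarrow> (nat \<Rightarrow> 'a set) \<Rightarrow> bool" where
  "pseudo_direct v n A \<longleftrightarrow>
     (\<forall>a \<in> sum_subgrps n A. a \<noteq> 0 \<longrightarrow>
        (\<exists>b. (\<forall>i\<in>{1..n}. b i \<in> A i) \<and>
             v (\<Sum>i=1..n. b i) = Min ((\<lambda>i. v (b i)) ` {1..n}) \<and>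
             v (a - (\<Sum>i=1..n. b i)) > v a))"

end

theory Submission
  imports Defs
begin

lemma vg_top: "valued_group v \<Longrightarrow> v 0 = top"
  unfolding valued_group_def by blast

lemma vg_tri: "valued_group v \<Longrightarrow> min (v a) (v b) \<le> v (a - b)"
  unfolding valued_group_def by blast

lemma vg_neg: assumes "valued_group v" shows "v (- a) = v a"
proof -
  have "min (v 0) (v a) \<le> v (0 - a)" using vg_tri[OF assms] .
  hence 1: "v a \<le> v (- a)" using vg_top[OF assms] by (simp add: min.absorb2)
  have "min (v 0) (v (-a)) \<le> v (0 - (- a))" using vg_tri[OF assms] .
  hence "v (-a) \<le> v a" using vg_top[OF assms] by (simp add: min.absorb2)
  with 1 show ?thesis by simp
qed

lemma vg_sym: assumes "valued_group v" shows "v (a - b) = v (b - a)"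
  using vg_neg[OF assms, of "a - b"] by simp

lemma vg_add: assumes "valued_group v" shows "min (v a) (v b) \<le> v (a + b)"
  using vg_tri[OF assms, of a "- b"] vg_neg[OF assms, of b] by simp

lemma vg_addI: assumes "valued_group v" "g \<le> v a" "g \<le> v b" shows "g \<le> v (a + b)"
  using vg_add[OF assms(1), of a b] assms(2,3) by (simp add: min_def split: if_splits)

lemma vg_diffI: assumes "valued_group v" "g \<le> v a" "g \<le> v b" shows "g \<le> v (a - b)"
  using vg_tri[OF assms(1), of a b] assms(2,3) by (simp add: min_def split: if_splits)

lemma vg_chain: assumes "valued_group v" "g \<le> v (a - b)" "g \<le> v (b - c)" shows "g \<le> v (a - c)"
proof -
  have "a - c = (a - b) + (b - c)" by simp
  thus ?thesis using vg_addI[OF assms] by simp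
qed

lemma vg_sum: assumes "valued_group v" "\<forall>i\<in>I. g \<le> v (f i)" shows "g \<le> v (sum f I)"
proof (cases "finite I")
  case True
  then show ?thesis using assms(2)
  proof (induction I rule: finite_induct)
    case empty then show ?case using vg_top[OF assms(1)] by simp
  next
    case (insert x F) then show ?case using vg_addI[OF assms(1)] by simp
  qed
next
  case False then show ?thesis using vg_top[OF assms(1)] by simp
qed

lemma vg_strict: assumes "valued_group v" "v a < v (a - b)" shows "v b = v a"
proof -
  have "b = a - (a - b)" by simp
  hence 1: "v a \<le> v b" using vg_tri[OF assms(1), of a "a - b"] assms(2) by (simp add: min_def split: if_splits)
  have "a = b + (a - b)" by simp
  hence "min (v b) (v (a - b)) \<le> v a" using vg_add[OF assms(1), of b "a - b"] by simp
  hence "v b \<le> v a" using assms(2) by (simp add: min_def split: if_splits)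
  with 1 show ?thesis by simp
qed

lemma sg_diff: "subgrp A \<Longrightarrow> a \<in> A \<Longrightarrow> b \<in> A \<Longrightarrow> a - b \<in> A"
  unfolding subgrp_def by (metis diff_conv_add_uminus)

lemma sg_add: "subgrp A \<Longrightarrow> a \<in> A \<Longrightarrow> b \<in> A \<Longrightarrow> a + b \<in> A"
  unfolding subgrp_def by blast

lemma sg_zero: "subgrp A \<Longrightarrow> 0 \<in> A"
  unfolding subgrp_def by blast

lemma balls_meet:
  assumes vg: "valued_group v" and z1: "z \<in> ball_in v A r a" and z2: "z \<in> ball_in v A s b" and rs: "r \<le> s"
  shows "ball_in v A s b \<subseteq> ball_in v A r a"
proof
  fix x assume x: "x \<in> ball_in v A s b"
  have "r \<le> v (a - z)" using z1 by (simp add: ball_in_def)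
  moreover have "r \<le> v (z - b)" using z2 rs vg_sym[OF vg, of z b] unfolding ball_in_def using order.trans by fastforce
  moreover have "r \<le> v (b - x)" using x rs unfolding ball_in_def using order.trans by fastforce
  ultimately have "r \<le> v (a - x)" using vg_chain[OF vg] by blast
  thus "x \<in> ball_in v A r a" using x by (simp add: ball_in_def)
qed


lemma gnest_point:
  assumes vg: "valued_group v" and sg: "subgrp A" and sc: "spherically_complete v A"
    and FA: "\<forall>(c,g)\<in>F. c \<in> A"
    and nest: "\<forall>(c,g)\<in>F. \<forall>(c',g')\<in>F. (g \<le> g' \<and> g \<le> v (c - c')) \<or> (g' \<le> g \<and> g' \<le> v (c - c'))"
  shows "\<exists>x\<in>A. \<forall>(c,g)\<in>F. g \<le> v (c - x)"
proof (cases "\<exists>(c,g)\<in>F. \<forall>(c',g')\<in>F. ball_in v A g c \<subseteq> ball_in v A g' c'")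
  case True
  then obtain c g where cg: "(c,g) \<in> F" and sub: "\<forall>(c',g')\<in>F. ball_in v A g c \<subseteq> ball_in v A g' c'" by blast
  have cA: "c \<in> A" using FA cg by blast
  have "c \<in> ball_in v A g c" using cA vg_top[OF vg] by (simp add: ball_in_def)
  hence "\<forall>(c',g')\<in>F. g' \<le> v (c' - c)" using sub unfolding ball_in_def by fastforce
  thus ?thesis using cA by blast
next
  case False
  have ex: "\<exists>C. C \<in> balls_in v A \<and> C \<subseteq> ball_in v A (snd e) (fst e) \<and>
     (\<exists>e'\<in>F. fst e' \<in> C \<and> ball_in v A (snd e') (fst e') \<subseteq> C)" if eF: "e \<in> F" for e
  proof -
    obtain c g where e: "e = (c,g)" by (cases e)
    from False eF e obtain c' g' where e'F: "(c',g') \<in> F" and nsub: "\<not> ball_in v A g c \<subseteq> ball_in v A g' c'"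
      by blast
    have cA: "c \<in> A" and c'A: "c' \<in> A" using FA eF e e'F by auto
    have nc: "(g \<le> g' \<and> g \<le> v (c - c')) \<or> (g' \<le> g \<and> g' \<le> v (c - c'))" using nest eF e e'F by fastforce
    have case2: False if "g' \<le> g" "g' \<le> v (c - c')"
    proof -
      have "ball_in v A g c \<subseteq> ball_in v A g' c'"
      proof
        fix x assume "x \<in> ball_in v A g c"
        hence xA: "x \<in> A" and "g \<le> v (c - x)" by (auto simp: ball_in_def)
        hence "g' \<le> v (c - x)" using that by (meson order.trans)
        moreover have "g' \<le> v (c' - c)" using that vg_sym[OF vg, of c c'] by simp
        ultimately have "g' \<le> v (c' - x)" using vg_chain[OF vg] by blast
        thus "x \<in> ball_in v A g' c'" using xA by (simp add: ball_in_def)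
      qed
      thus False using nsub by simp
    qed
    hence gg: "g \<le> g'" and gcc: "g \<le> v (c - c')" using nc by auto
    from nsub obtain y where yA: "y \<in> A" and ycg: "g \<le> v (c - y)" and ny: "\<not> g' \<le> v (c' - y)"
      by (auto simp: ball_in_def)
    define C where "C = ball_in v A (v (c' - y)) c'"
    have "C \<in> balls_in v A" unfolding C_def balls_in_def using c'A yA sg_diff[OF sg c'A yA] by blast
    moreover have "C \<subseteq> ball_in v A g c"
    proof
      fix z assume "z \<in> C"
      hence zA: "z \<in> A" and z: "v (c' - y) \<le> v (c' - z)" by (auto simp: C_def ball_in_def)
      have "g \<le> v (c' - c)" using gcc vg_sym[OF vg, of c c'] by simp
      hence "g \<le> v (c' - y)" using ycg vg_chain[OF vg] by blast
      hence "g \<le> v (c' - z)" using z by (meson order.trans)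
      hence "g \<le> v (c - z)" using gcc vg_chain[OF vg] by blast
      thus "z \<in> ball_in v A g c" using zA by (simp add: ball_in_def)
    qed
    moreover have "ball_in v A g' c' \<subseteq> C"
    proof
      fix z assume "z \<in> ball_in v A g' c'"
      hence zA: "z \<in> A" and "g' \<le> v (c' - z)" by (auto simp: ball_in_def)
      hence "v (c' - y) \<le> v (c' - z)" using ny by auto
      thus "z \<in> C" using zA by (simp add: C_def ball_in_def)
    qed
    moreover have "c' \<in> ball_in v A g' c'" using c'A vg_top[OF vg] by (simp add: ball_in_def)
    ultimately show ?thesis using e e'F by (intro exI[of _ C]) (auto intro!: bexI[of _ "(c',g')"])
  qed
  then obtain Cf where Cf: "\<And>e. e \<in> F \<Longrightarrow> Cf e \<in> balls_in v A \<and> Cf e \<subseteq> ball_in v A (snd e) (fst e) \<and>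
     (\<exists>e'\<in>F. fst e' \<in> Cf e \<and> ball_in v A (snd e') (fst e') \<subseteq> Cf e)" by metis
  have "nest_in v A (Cf ` F)"
    unfolding nest_in_def
  proof (intro conjI ballI)
    show "Cf ` F \<subseteq> balls_in v A" using Cf by blast
  next
    fix B1 B2 assume "B1 \<in> Cf ` F" "B2 \<in> Cf ` F"
    then obtain e1 e2 where e1: "e1 \<in> F" "B1 = Cf e1" and e2: "e2 \<in> F" "B2 = Cf e2" by blast
    obtain a1 a2 where a1: "a1 \<in> F" "fst a1 \<in> B1" "ball_in v A (snd a1) (fst a1) \<subseteq> B1"
      and a2: "a2 \<in> F" "fst a2 \<in> B2" "ball_in v A (snd a2) (fst a2) \<subseteq> B2" using Cf e1 e2 by metis
    have common: "\<exists>z. z \<in> B1 \<and> z \<in> B2"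
    proof -
      obtain c1 g1 c2 g2 where a1e: "a1 = (c1,g1)" and a2e: "a2 = (c2,g2)" by (cases a1, cases a2)
      have c1A: "c1 \<in> A" and c2A: "c2 \<in> A" using FA a1 a2 a1e a2e by auto
      have nc: "(g1 \<le> g2 \<and> g1 \<le> v (c1 - c2)) \<or> (g2 \<le> g1 \<and> g2 \<le> v (c1 - c2))"
        using nest a1 a2 a1e a2e by fastforce
      show ?thesis
      proof (cases "g1 \<le> g2 \<and> g1 \<le> v (c1 - c2)")
        case True
        hence "c2 \<in> ball_in v A g1 c1" using c2A by (simp add: ball_in_def)
        thus ?thesis using a1 a2 a1e a2e by auto
      next
        case False
        hence "g2 \<le> v (c2 - c1)" using nc vg_sym[OF vg, of c1 c2] by auto
        hence "c1 \<in> ball_in v A g2 c2" using c1A by (simp add: ball_in_def)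
        thus ?thesis using a1 a2 a1e a2e by auto
      qed
    qed
    then obtain z where z: "z \<in> B1" "z \<in> B2" by blast
    obtain r1 b1 where B1: "B1 = ball_in v A r1 b1" using Cf e1 unfolding balls_in_def by blast
    obtain r2 b2 where B2: "B2 = ball_in v A r2 b2" using Cf e2 unfolding balls_in_def by blast
    show "B1 \<subseteq> B2 \<or> B2 \<subseteq> B1"
    proof (cases "r1 \<le> r2")
      case True then show ?thesis using balls_meet[OF vg, of z A r1 b1 r2 b2] z B1 B2 by blast
    next
      case False then show ?thesis using balls_meet[OF vg, of z A r2 b2 r1 b1] z B1 B2 by auto
    qed
  qed
  then obtain x where xA: "x \<in> A" and x: "x \<in> \<Inter>(Cf ` F)" using sc unfolding spherically_complete_def by blast
  have "\<forall>(c,g)\<in>F. g \<le> v (c - x)"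
  proof (intro ballI, clarify)
    fix c g assume "(c,g) \<in> F"
    hence "x \<in> ball_in v A g c" using Cf[of "(c,g)"] x by auto
    thus "g \<le> v (c - x)" by (simp add: ball_in_def)
  qed
  thus ?thesis using xA by blast
qed


lemma prod_point:
  assumes vg: "valued_group v" and sg: "\<forall>i\<in>{1..n}. subgrp (A i)"
    and sc: "\<forall>i\<in>{1..n}. spherically_complete v (A i)"
    and FP: "\<forall>(p,g)\<in>F. \<forall>i\<in>{1..n}. p i \<in> A i"
    and nest: "\<forall>(p,g)\<in>F. \<forall>(p',g')\<in>F. (g \<le> g' \<and> (\<forall>i\<in>{1..n}. g \<le> v (p i - p' i)))
        \<or> (g' \<le> g \<and> (\<forall>i\<in>{1..n}. g' \<le> v (p i - p' i)))"
  shows "\<exists>q. (\<forall>i\<in>{1..n}. q i \<in> A i) \<and> (\<forall>(p,g)\<in>F. \<forall>i\<in>{1..n}. g \<le> v (p i - q i))"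
proof -
  have "\<exists>x. x \<in> A i \<and> (\<forall>(p,g)\<in>F. g \<le> v (p i - x))" if i: "i \<in> {1..n}" for i
  proof -
    let ?Fi = "(\<lambda>(p,g). (p i, g)) ` F"
    have 1: "\<forall>(c,g)\<in>?Fi. c \<in> A i" using FP i by auto
    have 2: "\<forall>(c,g)\<in>?Fi. \<forall>(c',g')\<in>?Fi. (g \<le> g' \<and> g \<le> v (c - c')) \<or> (g' \<le> g \<and> g' \<le> v (c - c'))"
    proof -
      { fix g g' p p' assume "(p,g) \<in> F" "(p',g') \<in> F"
        hence "(g \<le> g' \<and> (\<forall>i\<in>{1..n}. g \<le> v (p i - p' i))) \<or> (g' \<le> g \<and> (\<forall>i\<in>{1..n}. g' \<le> v (p i - p' i)))"
          using nest by fastforce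
        hence "(g \<le> g' \<and> g \<le> v (p i - p' i)) \<or> (g' \<le> g \<and> g' \<le> v (p i - p' i))" using i by blast }
      thus ?thesis by auto
    qed
    obtain x where "x \<in> A i" "\<forall>(c,g)\<in>?Fi. g \<le> v (c - x)"
      using gnest_point[OF vg _ _ 1 2] sg sc i by blast
    thus ?thesis by auto
  qed
  hence "\<forall>i\<in>{1..n}. \<exists>x. x \<in> A i \<and> (\<forall>(p,g)\<in>F. g \<le> v (p i - x))" by blast
  from bchoice[OF this] obtain f where "\<forall>i\<in>{1..n}. f i \<in> A i \<and> (\<forall>(p,g)\<in>F. g \<le> v (p i - f i))" by blast
  thus ?thesis by blast
qed

lemma lift:
  assumes vg: "valued_group v" and sg: "\<forall>i\<in>{1..n}. subgrp (A i)"
    and sc: "\<forall>i\<in>{1..n}. spherically_complete v (A i)"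
    and pd: "pseudo_direct v n A" and yS: "y \<in> sum_subgrps n A"
  shows "\<exists>p. (\<forall>i\<in>{1..n}. p i \<in> A i) \<and> (\<Sum>i=1..n. p i) = y \<and> (\<forall>i\<in>{1..n}. v y \<le> v (p i))"
proof (rule ccontr)
  assume nex: "\<not> ?thesis"
  define good where "good p \<longleftrightarrow> (\<forall>i\<in>{1..n}. p i \<in> A i) \<and> (\<forall>i\<in>{1..n}. v y \<le> v (p i))" for p :: "nat \<Rightarrow> 'a"
  define rad where "rad p = v (y - (\<Sum>i=1..n. p i))" for p :: "nat \<Rightarrow> 'a"
  define Z where "Z = {F. (\<forall>p\<in>F. good p) \<and> (\<forall>p\<in>F. \<forall>p'\<in>F. (rad p \<le> rad p' \<and> (\<forall>i\<in>{1..n}. rad p \<le> v (p i - p' i)))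
        \<or> (rad p' \<le> rad p \<and> (\<forall>i\<in>{1..n}. rad p' \<le> v (p i - p' i))))}"
  have "\<forall>C\<in>chains Z. \<Union>C \<in> Z"
  proof
    fix C assume C: "C \<in> chains Z"
    show "\<Union>C \<in> Z" unfolding Z_def
    proof (intro CollectI conjI ballI)
      fix p assume "p \<in> \<Union>C" thus "good p" using C unfolding chains_def Z_def by blast
    next
      fix p p' assume "p \<in> \<Union>C" "p' \<in> \<Union>C"
      then obtain X X' where "X \<in> C" "X' \<in> C" "p \<in> X" "p' \<in> X'" by blast
      moreover have "X \<subseteq> X' \<or> X' \<subseteq> X" using C \<open>X \<in> C\<close> \<open>X' \<in> C\<close> unfolding chains_def chain_subset_def by blast
      ultimately obtain Y where "Y \<in> C" "p \<in> Y" "p' \<in> Y" by blast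
      hence "Y \<in> Z" using C unfolding chains_def by blast
      thus "(rad p \<le> rad p' \<and> (\<forall>i\<in>{1..n}. rad p \<le> v (p i - p' i)))
        \<or> (rad p' \<le> rad p \<and> (\<forall>i\<in>{1..n}. rad p' \<le> v (p i - p' i)))"
        using \<open>p \<in> Y\<close> \<open>p' \<in> Y\<close> unfolding Z_def by blast
    qed
  qed
  then obtain M where MZ: "M \<in> Z" and Mmax: "\<forall>X\<in>Z. M \<subseteq> X \<longrightarrow> X = M" using Zorn_Lemma by blast
  have Mgood: "\<forall>p\<in>M. good p" and Mnest: "\<forall>p\<in>M. \<forall>p'\<in>M. (rad p \<le> rad p' \<and> (\<forall>i\<in>{1..n}. rad p \<le> v (p i - p' i)))
        \<or> (rad p' \<le> rad p \<and> (\<forall>i\<in>{1..n}. rad p' \<le> v (p i - p' i)))" using MZ unfolding Z_def by auto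
  have radge: "v y \<le> rad p" if "good p" for p
  proof -
    have "v y \<le> v (\<Sum>i=1..n. p i)" using vg_sum[OF vg, of "{1..n}" "v y" p] that unfolding good_def by blast
    thus ?thesis unfolding rad_def using vg_diffI[OF vg, of "v y" y] by simp
  qed
  have Mne: "M \<noteq> {}"
  proof
    assume M0: "M = {}"
    have "{\<lambda>_. 0} \<in> Z" unfolding Z_def good_def using sg sg_zero vg_top[OF vg] by auto
    thus False using Mmax M0 by blast
  qed
  then obtain p0 where p0: "p0 \<in> M" by blast
  have h1: "\<forall>(p,g)\<in>(\<lambda>p. (p, rad p)) ` M. \<forall>i\<in>{1..n}. p i \<in> A i" using Mgood unfolding good_def by auto
  have h2: "\<forall>(p,g)\<in>(\<lambda>p. (p, rad p)) ` M. \<forall>(p',g')\<in>(\<lambda>p. (p, rad p)) ` M. (g \<le> g' \<and> (\<forall>i\<in>{1..n}. g \<le> v (p i - p' i)))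
        \<or> (g' \<le> g \<and> (\<forall>i\<in>{1..n}. g' \<le> v (p i - p' i)))"
    using Mnest by auto
  obtain q where qA: "\<forall>i\<in>{1..n}. q i \<in> A i" and qM: "\<forall>(p,g)\<in>(\<lambda>p. (p, rad p)) ` M. \<forall>i\<in>{1..n}. g \<le> v (p i - q i)"
    using prod_point[OF vg sg sc h1 h2] by blast
  have qM': "\<forall>p\<in>M. \<forall>i\<in>{1..n}. rad p \<le> v (p i - q i)" using qM by auto
  have qgood: "good q" unfolding good_def
  proof (intro conjI ballI)
    fix i assume i: "i \<in> {1..n}"
    show "q i \<in> A i" using qA i by blast
    have "v y \<le> v (p0 i)" using Mgood p0 i unfolding good_def by blast
    moreover have "v y \<le> v (p0 i - q i)"
    proof -
      have "rad p0 \<le> v (p0 i - q i)" using qM' p0 i by blast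
      moreover have "v y \<le> rad p0" using radge Mgood p0 by blast
      ultimately show ?thesis by (rule order.trans[rotated])
    qed
    ultimately have "v y \<le> v (p0 i - (p0 i - q i))" using vg_diffI[OF vg] by blast
    thus "v y \<le> v (q i)" by simp
  qed
  have radq: "rad p \<le> rad q" if "p \<in> M" for p
  proof -
    have "rad p \<le> v (\<Sum>i=1..n. p i - q i)" using vg_sum[OF vg, of "{1..n}" "rad p" "\<lambda>i. p i - q i"] qM' that by blast
    hence "rad p \<le> v ((\<Sum>i=1..n. p i) - (\<Sum>i=1..n. q i))" by (simp add: sum_subtractf)
    moreover have "rad p \<le> v (y - (\<Sum>i=1..n. p i))" unfolding rad_def by simp
    ultimately show ?thesis unfolding rad_def using vg_chain[OF vg] by blast
  qed
  define z where "z = y - (\<Sum>i=1..n. q i)"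
  have z0: "z \<noteq> 0" using nex qgood unfolding good_def z_def by auto
  have zS: "z \<in> sum_subgrps n A"
  proof -
    obtain a where a: "\<forall>i\<in>{1..n}. a i \<in> A i" "y = (\<Sum>i=1..n. a i)" using yS unfolding sum_subgrps_def by blast
    have "z = (\<Sum>i=1..n. a i - q i)" unfolding z_def a(2) by (simp add: sum_subtractf)
    moreover have "\<forall>i\<in>{1..n}. a i - q i \<in> A i" using a(1) qA sg sg_diff by blast
    ultimately show ?thesis unfolding sum_subgrps_def by (intro CollectI exI[of _ "\<lambda>i. a i - q i"]) simp
  qed
  obtain b where bA: "\<forall>i\<in>{1..n}. b i \<in> A i" and bmin: "v (\<Sum>i=1..n. b i) = Min ((\<lambda>i. v (b i)) ` {1..n})"
    and bz: "v (z - (\<Sum>i=1..n. b i)) > v z" using pd zS z0 unfolding pseudo_direct_def by blast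
  have vb: "v (\<Sum>i=1..n. b i) = v z" using vg_strict[OF vg bz] .
  have bge: "\<forall>i\<in>{1..n}. rad q \<le> v (b i)"
  proof
    fix i assume i: "i \<in> {1..n}"
    have "Min ((\<lambda>i. v (b i)) ` {1..n}) \<le> v (b i)" using i by (intro Min_le) auto
    thus "rad q \<le> v (b i)" using bmin vb unfolding rad_def z_def by simp
  qed
  define q' where "q' = (\<lambda>i. q i + b i)"
  have radq': "rad q < rad q'"
  proof -
    have "y - (\<Sum>i=1..n. q' i) = z - (\<Sum>i=1..n. b i)" unfolding q'_def z_def by (simp add: sum.distrib)
    hence "rad q' = v (z - (\<Sum>i=1..n. b i))" unfolding rad_def by simp
    moreover have "rad q = v z" unfolding rad_def z_def by simp
    ultimately show ?thesis using bz by simp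
  qed
  have q'good: "good q'" unfolding good_def
  proof (intro conjI ballI)
    fix i assume i: "i \<in> {1..n}"
    show "q' i \<in> A i" unfolding q'_def using sg_add sg qA bA i by blast
    have "v y \<le> v (b i)" using bge i radge[OF qgood] by (meson order.trans)
    thus "v y \<le> v (q' i)" unfolding q'_def using vg_addI[OF vg] qgood i unfolding good_def by blast
  qed
  have "insert q' M \<in> Z" unfolding Z_def
  proof (intro CollectI conjI ballI)
    fix p assume "p \<in> insert q' M" thus "good p" using q'good Mgood by blast
  next
    have key: "rad p \<le> rad q' \<and> (\<forall>i\<in>{1..n}. rad p \<le> v (p i - q' i))" if pM: "p \<in> M" for p
    proof
      show "rad p \<le> rad q'" using radq[OF pM] radq' by simp
      show "\<forall>i\<in>{1..n}. rad p \<le> v (p i - q' i)"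
      proof
        fix i assume i: "i \<in> {1..n}"
        have "rad p \<le> v (p i - q i)" using qM' pM i by blast
        moreover have "rad p \<le> v (q i - q' i)"
        proof -
          have "q i - q' i = - b i" unfolding q'_def by simp
          hence "v (q i - q' i) = v (b i)" using vg_neg[OF vg, of "b i"] by simp
          moreover have "rad q \<le> v (b i)" using bge i by blast
          ultimately show ?thesis using radq[OF pM] by simp
        qed
        ultimately show "rad p \<le> v (p i - q' i)" using vg_chain[OF vg] by blast
      qed
    qed
    fix p p' assume pp: "p \<in> insert q' M" "p' \<in> insert q' M"
    show "(rad p \<le> rad p' \<and> (\<forall>i\<in>{1..n}. rad p \<le> v (p i - p' i)))
        \<or> (rad p' \<le> rad p \<and> (\<forall>i\<in>{1..n}. rad p' \<le> v (p i - p' i)))"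
    proof (cases "p = q'")
      case True
      show ?thesis
      proof (cases "p' = q'")
        case True thus ?thesis using \<open>p = q'\<close> vg_top[OF vg] by simp
      next
        case False
        hence "p' \<in> M" using pp by blast
        hence "rad p' \<le> rad q' \<and> (\<forall>i\<in>{1..n}. rad p' \<le> v (p' i - q' i))" using key by blast
        hence "rad p' \<le> rad q' \<and> (\<forall>i\<in>{1..n}. rad p' \<le> v (q' i - p' i))" using vg_sym[OF vg] by simp
        thus ?thesis using \<open>p = q'\<close> by blast
      qed
    next
      case False
      hence pM: "p \<in> M" using pp by blast
      show ?thesis
      proof (cases "p' = q'")
        case True thus ?thesis using key[OF pM] by simp
      next
        case False
        hence "p' \<in> M" using pp by blast
        thus ?thesis using Mnest pM by blast
      qed
    qed
  qed
  moreover have "q' \<notin> M" using radq radq' by fastforce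
  ultimately show False using Mmax by blast
qed


lemma S_mem: "\<forall>i\<in>{1..n}. p i \<in> A i \<Longrightarrow> (\<Sum>i=1..n. p i) \<in> sum_subgrps n A"
  unfolding sum_subgrps_def by blast

lemma S_diff:
  assumes sg: "\<forall>i\<in>{1..n}. subgrp (A i)" and x: "x \<in> sum_subgrps n A" and q: "\<forall>i\<in>{1..n}. q i \<in> A i"
  shows "x - (\<Sum>i=1..n. q i) \<in> sum_subgrps n A"
proof -
  obtain a where a: "\<forall>i\<in>{1..n}. a i \<in> A i" "x = (\<Sum>i=1..n. a i)" using x unfolding sum_subgrps_def by blast
  have "x - (\<Sum>i=1..n. q i) = (\<Sum>i=1..n. a i - q i)" unfolding a(2) by (simp add: sum_subtractf)
  moreover have "\<forall>i\<in>{1..n}. a i - q i \<in> A i" using a(1) q sg sg_diff by blast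
  ultimately show ?thesis unfolding sum_subgrps_def by (intro CollectI exI[of _ "\<lambda>i. a i - q i"]) simp
qed

lemma sum_close:
  assumes vg: "valued_group v" and h: "\<forall>i\<in>{1..n}. g \<le> v (p i - q i)"
  shows "g \<le> v ((\<Sum>i=1..n. p i) - (\<Sum>i=1..n. q i))"
proof -
  have "g \<le> v (\<Sum>i=1..n. p i - q i)" using vg_sum[OF vg, of "{1..n}" g "\<lambda>i. p i - q i"] h by blast
  thus ?thesis by (simp add: sum_subtractf)
qed

theorem mainTheorem8:
  fixes v :: "'a::ab_group_add \<Rightarrow> 'g::{linorder,order_top}"
    and n :: nat and A :: "nat \<Rightarrow> 'a set"
  assumes "valued_group v"
    and "\<forall>i\<in>{1..n}. subgrp (A i)"
    and "\<forall>i\<in>{1..n}. spherically_complete v (A i)"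
    and "pseudo_direct v n A"
  shows "spherically_complete v (sum_subgrps n A)"
  unfolding spherically_complete_def
proof (intro allI impI)
  note vg = assms(1) and sg = assms(2) and sc = assms(3) and pd = assms(4)
  define S where "S = sum_subgrps n A"
  fix N assume nestN: "nest_in v (sum_subgrps n A) N"
  have NB: "N \<subseteq> balls_in v S" and Ncomp: "\<forall>B\<in>N. \<forall>C\<in>N. B \<subseteq> C \<or> C \<subseteq> B"
    using nestN unfolding nest_in_def S_def by auto
  have "\<forall>B\<in>N. \<exists>rc. B = ball_in v S (fst rc) (snd rc) \<and> snd rc \<in> S"
  proof
    fix B assume "B \<in> N"
    then obtain r c where "B = ball_in v S r c" "c \<in> S" using NB unfolding balls_in_def by blast
    thus "\<exists>rc. B = ball_in v S (fst rc) (snd rc) \<and> snd rc \<in> S" by (intro exI[of _ "(r,c)"]) simp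
  qed
  from bchoice[OF this] obtain f where f: "\<forall>B\<in>N. B = ball_in v S (fst (f B)) (snd (f B)) \<and> snd (f B) \<in> S" by blast
  define rad where "rad B = fst (f B)" for B
  define ctr where "ctr B = snd (f B)" for B
  have memB: "x \<in> B \<longleftrightarrow> x \<in> S \<and> rad B \<le> v (ctr B - x)" if "B \<in> N" for B x
    using f that unfolding rad_def ctr_def ball_in_def by blast
  have ctrB: "ctr B \<in> B" if "B \<in> N" for B
    using memB[OF that] f that vg_top[OF vg] unfolding ctr_def by simp
  have R1: "rad B \<le> rad B'" if "B \<in> N" "B' \<in> N" "B' \<subseteq> B" for B B'
  proof (rule ccontr)
    assume "\<not> rad B \<le> rad B'"
    hence lt: "rad B' < rad B" by simp
    have "B \<subseteq> B'"
    proof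
      fix x assume x: "x \<in> B"
      have xS: "x \<in> S" and 1: "rad B \<le> v (ctr B - x)" using memB[OF that(1)] x by auto
      have "ctr B' \<in> B" using ctrB[OF that(2)] that(3) by blast
      hence "rad B \<le> v (ctr B - ctr B')" using memB[OF that(1)] by blast
      hence "rad B \<le> v (ctr B' - ctr B)" using vg_sym[OF vg] by simp
      hence "rad B \<le> v (ctr B' - x)" using 1 vg_chain[OF vg] by blast
      hence "rad B' \<le> v (ctr B' - x)" using lt by simp
      thus "x \<in> B'" using memB[OF that(2)] xS by blast
    qed
    hence "B = B'" using that(3) by blast
    thus False using lt by simp
  qed
  define inP where "inP p \<longleftrightarrow> (\<forall>i\<in>{1..n}. p i \<in> A i)" for p :: "nat \<Rightarrow> 'a"
  define phi where "phi p = (\<Sum>i=1..n. p i)" for p :: "nat \<Rightarrow> 'a"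
  have phiS: "phi p \<in> S" if "inP p" for p using S_mem that unfolding phi_def inP_def S_def by blast
  have phic: "g \<le> v (phi p - phi q)" if "\<forall>i\<in>{1..n}. g \<le> v (p i - q i)" for g p q
    using sum_close[OF vg that] unfolding phi_def by simp
  define Zp where "Zp R \<longleftrightarrow> R \<subseteq> N \<times> UNIV \<and> (\<forall>x\<in>R. inP (snd x) \<and> phi (snd x) \<in> fst x) \<and>
     (\<forall>x\<in>R. \<forall>y\<in>R. fst y \<subseteq> fst x \<longrightarrow> (\<forall>i\<in>{1..n}. rad (fst x) \<le> v (snd y i - snd x i)))" for R
  define Z where "Z = {R. Zp R}"
  have "\<forall>C\<in>chains Z. \<Union>C \<in> Z"
  proof
    fix C assume C: "C \<in> chains Z"
    have CZ: "\<forall>X\<in>C. Zp X" and Cch: "\<forall>X\<in>C. \<forall>Y\<in>C. X \<subseteq> Y \<or> Y \<subseteq> X" using C unfolding chains_def chain_subset_def Z_def by auto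
    have 1: "\<Union>C \<subseteq> N \<times> UNIV" using CZ unfolding Zp_def by blast
    have 2: "\<forall>x\<in>\<Union>C. inP (snd x) \<and> phi (snd x) \<in> fst x"
    proof
      fix x assume "x \<in> \<Union>C"
      then obtain X where "X \<in> C" "x \<in> X" by blast
      thus "inP (snd x) \<and> phi (snd x) \<in> fst x" using CZ unfolding Zp_def by blast
    qed
    have 3: "\<forall>x\<in>\<Union>C. \<forall>y\<in>\<Union>C. fst y \<subseteq> fst x \<longrightarrow> (\<forall>i\<in>{1..n}. rad (fst x) \<le> v (snd y i - snd x i))"
    proof (intro ballI)
      fix x y assume "x \<in> \<Union>C" "y \<in> \<Union>C"
      then obtain X Y where XY: "X \<in> C" "Y \<in> C" "x \<in> X" "y \<in> Y" by blast
      have "X \<subseteq> Y \<or> Y \<subseteq> X" using Cch XY(1,2) by blast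
      then obtain W where W: "W \<in> C" "x \<in> W" "y \<in> W" using XY by blast
      hence "Zp W" using CZ by blast
      thus "fst y \<subseteq> fst x \<longrightarrow> (\<forall>i\<in>{1..n}. rad (fst x) \<le> v (snd y i - snd x i))"
        using W unfolding Zp_def by blast
    qed
    show "\<Union>C \<in> Z" unfolding Z_def Zp_def using 1 2 3 by blast
  qed
  then obtain M where MZ: "M \<in> Z" and Mmax: "\<forall>X\<in>Z. M \<subseteq> X \<longrightarrow> X = M" using Zorn_Lemma by blast
  have MN: "M \<subseteq> N \<times> UNIV" and M2x: "\<forall>x\<in>M. inP (snd x) \<and> phi (snd x) \<in> fst x"
    and M3x: "\<forall>x\<in>M. \<forall>y\<in>M. fst y \<subseteq> fst x \<longrightarrow> (\<forall>i\<in>{1..n}. rad (fst x) \<le> v (snd y i - snd x i))"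
    using MZ unfolding Z_def Zp_def by auto
  have M2: "inP p \<and> phi p \<in> B" if "(B,p) \<in> M" for B p using M2x that by force
  have M3': "\<forall>i\<in>{1..n}. rad B \<le> v (p' i - p i)" if "(B,p) \<in> M" "(B',p') \<in> M" "B' \<subseteq> B" for B p B' p'
    using M3x that by force
  have ins: "insert (B0,p0) M \<in> Z" if i1: "B0 \<in> N" and i2: "inP p0" and i3: "phi p0 \<in> B0"
    and i4: "\<And>B2 p2. (B2,p2) \<in> M \<Longrightarrow> B2 \<subseteq> B0 \<Longrightarrow> \<forall>i\<in>{1..n}. rad B0 \<le> v (p2 i - p0 i)"
    and i5: "\<And>B1 p1. (B1,p1) \<in> M \<Longrightarrow> B0 \<subseteq> B1 \<Longrightarrow> \<forall>i\<in>{1..n}. rad B1 \<le> v (p0 i - p1 i)" for B0 p0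
  proof -
    have a: "insert (B0,p0) M \<subseteq> N \<times> UNIV" using MN i1 by blast
    have b: "\<forall>x\<in>insert (B0,p0) M. inP (snd x) \<and> phi (snd x) \<in> fst x" using M2x i2 i3 by auto
    have c: "\<forall>x\<in>insert (B0,p0) M. \<forall>y\<in>insert (B0,p0) M. fst y \<subseteq> fst x \<longrightarrow> (\<forall>i\<in>{1..n}. rad (fst x) \<le> v (snd y i - snd x i))"
    proof (rule ballI, rule ballI, rule impI)
      fix x y assume x: "x \<in> insert (B0,p0) M" and y: "y \<in> insert (B0,p0) M" and s: "fst y \<subseteq> fst x"
      show "\<forall>i\<in>{1..n}. rad (fst x) \<le> v (snd y i - snd x i)"
      proof (cases "x = (B0,p0)")
        case xT: True
        show ?thesis
        proof (cases "y = (B0,p0)")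
          case True thus ?thesis using xT vg_top[OF vg] by simp
        next
          case False hence "y \<in> M" using y by blast
          hence "(fst y, snd y) \<in> M" by simp
          thus ?thesis using i4[of "fst y" "snd y"] s xT by simp
        qed
      next
        case False hence xM: "x \<in> M" using x by blast
        show ?thesis
        proof (cases "y = (B0,p0)")
          case True
          have "(fst x, snd x) \<in> M" using xM by simp
          thus ?thesis using i5[of "fst x" "snd x"] s True by simp
        next
          case False hence "y \<in> M" using y by blast
          thus ?thesis using M3x xM s by blast
        qed
      qed
    qed
    show ?thesis unfolding Z_def Zp_def using a b c by blast
  qed
  have MF1: "\<forall>(p,g)\<in>(\<lambda>(B,p). (p, rad B)) ` M. \<forall>i\<in>{1..n}. p i \<in> A i" using M2 unfolding inP_def by auto
  have MF2: "\<forall>(p,g)\<in>(\<lambda>(B,p). (p, rad B)) ` M. \<forall>(p',g')\<in>(\<lambda>(B,p). (p, rad B)) ` M.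
      (g \<le> g' \<and> (\<forall>i\<in>{1..n}. g \<le> v (p i - p' i))) \<or> (g' \<le> g \<and> (\<forall>i\<in>{1..n}. g' \<le> v (p i - p' i)))"
  proof -
    have "(rad B1 \<le> rad B2 \<and> (\<forall>i\<in>{1..n}. rad B1 \<le> v (p1 i - p2 i))) \<or> (rad B2 \<le> rad B1 \<and> (\<forall>i\<in>{1..n}. rad B2 \<le> v (p1 i - p2 i)))"
      if m1: "(B1,p1) \<in> M" and m2: "(B2,p2) \<in> M" for B1 p1 B2 p2
    proof -
      have N1: "B1 \<in> N" and N2: "B2 \<in> N" using MN m1 m2 by auto
      show ?thesis
      proof (cases "B2 \<subseteq> B1")
        case True
        have "rad B1 \<le> rad B2" using R1[OF N1 N2 True] .
        moreover have "\<forall>i\<in>{1..n}. rad B1 \<le> v (p1 i - p2 i)" using M3'[OF m1 m2 True] vg_sym[OF vg] by simp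
        ultimately show ?thesis by blast
      next
        case False
        hence sub: "B1 \<subseteq> B2" using Ncomp N1 N2 by blast
        have "rad B2 \<le> rad B1" using R1[OF N2 N1 sub] .
        moreover have "\<forall>i\<in>{1..n}. rad B2 \<le> v (p1 i - p2 i)" using M3'[OF m2 m1 sub] by simp
        ultimately show ?thesis by blast
      qed
    qed
    note H = this
    show ?thesis
    proof (rule ballI)
      fix x assume x: "x \<in> (\<lambda>(B,p). (p, rad B)) ` M"
      obtain B1 p1 where m1: "(B1,p1) \<in> M" and xe: "x = (p1, rad B1)" using x by auto
      show "case x of (p,g) \<Rightarrow> \<forall>(p',g')\<in>(\<lambda>(B,p). (p, rad B)) ` M. (g \<le> g' \<and> (\<forall>i\<in>{1..n}. g \<le> v (p i - p' i))) \<or> (g' \<le> g \<and> (\<forall>i\<in>{1..n}. g' \<le> v (p i - p' i)))"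
        unfolding xe prod.case
      proof (rule ballI)
        fix y assume y: "y \<in> (\<lambda>(B,p). (p, rad B)) ` M"
        obtain B2 p2 where m2: "(B2,p2) \<in> M" and ye: "y = (p2, rad B2)" using y by auto
        show "case y of (p',g') \<Rightarrow> (rad B1 \<le> g' \<and> (\<forall>i\<in>{1..n}. rad B1 \<le> v (p1 i - p' i))) \<or> (g' \<le> rad B1 \<and> (\<forall>i\<in>{1..n}. g' \<le> v (p1 i - p' i)))"
          unfolding ye prod.case using H[OF m1 m2] by simp
      qed
    qed
  qed
  have full: "\<forall>B\<in>N. \<exists>p. (B,p) \<in> M"
  proof (rule ccontr)
    assume "\<not> ?thesis"
    then obtain B where BN: "B \<in> N" and nB: "\<forall>p. (B,p) \<notin> M" by blast
    show False
    proof (cases "\<exists>B'' p''. (B'',p'') \<in> M \<and> B'' \<subseteq> B")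
      case True
      then obtain B'' p'' where m'': "(B'',p'') \<in> M" and sub'': "B'' \<subseteq> B" by blast
      have N'': "B'' \<in> N" using MN m'' by auto
      let ?R = "insert (B,p'') M"
        have new1: "\<forall>i\<in>{1..n}. rad B \<le> v (p2 i - p'' i)" if m2: "(B2,p2) \<in> M" and s2: "B2 \<subseteq> B" for B2 p2
        proof -
          have N2: "B2 \<in> N" using MN m2 by auto
          show ?thesis
          proof (cases "B2 \<subseteq> B''")
            case True
            have "\<forall>i\<in>{1..n}. rad B'' \<le> v (p2 i - p'' i)" using M3'[OF m'' m2 True] .
            moreover have "rad B \<le> rad B''" using R1[OF BN N'' sub''] .
            ultimately show ?thesis using order.trans by blast
          next
            case False
            hence sub: "B'' \<subseteq> B2" using Ncomp N2 N'' by blast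
            have "\<forall>i\<in>{1..n}. rad B2 \<le> v (p2 i - p'' i)" using M3'[OF m2 m'' sub] vg_sym[OF vg] by simp
            moreover have "rad B \<le> rad B2" using R1[OF BN N2 s2] .
            ultimately show ?thesis using order.trans by blast
          qed
        qed
        have new2: "\<forall>i\<in>{1..n}. rad B1 \<le> v (p'' i - p1 i)" if m1: "(B1,p1) \<in> M" and s1: "B \<subseteq> B1" for B1 p1
          using M3'[OF m1 m''] s1 sub'' by blast
        have "?R \<in> Z" by (intro ins) (use BN M2[OF m''] sub'' new1 new2 in blast)+
      moreover have "M \<subseteq> ?R" by blast
      moreover have "?R \<noteq> M" using nB by blast
      ultimately show False using Mmax by blast
    next
      case False
      hence above: "B \<subseteq> B1" if "(B1,p1) \<in> M" for B1 p1 using Ncomp that MN BN by blast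
      obtain q where qA: "\<forall>i\<in>{1..n}. q i \<in> A i" and qM: "\<forall>(p,g)\<in>(\<lambda>(B,p). (p, rad B)) ` M. \<forall>i\<in>{1..n}. g \<le> v (p i - q i)"
        using prod_point[OF vg sg sc MF1 MF2] by blast
      have qM': "\<forall>i\<in>{1..n}. rad B1 \<le> v (p1 i - q i)" if "(B1,p1) \<in> M" for B1 p1 using qM that by fastforce
      define d where "d = ctr B - phi q"
      have dS: "d \<in> sum_subgrps n A" unfolding d_def phi_def
        using S_diff[OF sg _ qA] ctrB[OF BN] memB[OF BN] unfolding S_def by blast
      obtain t where tA: "\<forall>i\<in>{1..n}. t i \<in> A i" and td: "(\<Sum>i=1..n. t i) = d" and tv: "\<forall>i\<in>{1..n}. v d \<le> v (t i)"
        using lift[OF vg sg sc pd dS] by blast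
      define p where "p = (\<lambda>i. q i + t i)"
      have pP: "inP p" unfolding inP_def p_def using qA tA sg sg_add by blast
      have php: "phi p = ctr B" unfolding p_def phi_def using td unfolding d_def phi_def by (simp add: sum.distrib)
      have dge: "rad B1 \<le> v d" if m1: "(B1,p1) \<in> M" for B1 p1
      proof -
        have N1: "B1 \<in> N" using MN m1 by auto
        have "ctr B \<in> B1" using ctrB[OF BN] above[OF m1] by blast
        hence a: "rad B1 \<le> v (ctr B - ctr B1)" using memB[OF N1] vg_sym[OF vg] by simp
        have b: "rad B1 \<le> v (ctr B1 - phi p1)" using M2 m1 memB[OF N1] by blast
        have c: "rad B1 \<le> v (phi p1 - phi q)" using phic qM'[OF m1] by blast
        show ?thesis unfolding d_def using vg_chain[OF vg a vg_chain[OF vg b c]] .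
      qed
      let ?R = "insert (B,p) M"
        have new2: "\<forall>i\<in>{1..n}. rad B1 \<le> v (p i - p1 i)" if m1: "(B1,p1) \<in> M" for B1 p1
        proof
          fix i assume i: "i \<in> {1..n}"
          have a: "rad B1 \<le> v (p1 i - q i)" using qM'[OF m1] i by blast
          have "q i - p i = - t i" unfolding p_def by simp
          hence "v (q i - p i) = v (t i)" using vg_neg[OF vg, of "t i"] by simp
          hence b: "rad B1 \<le> v (q i - p i)" using tv i dge[OF m1] by (metis order.trans)
          have "rad B1 \<le> v (p1 i - p i)" using vg_chain[OF vg a b] .
          thus "rad B1 \<le> v (p i - p1 i)" using vg_sym[OF vg] by simp
        qed
        have new1: False if m2: "(B2,p2) \<in> M" and s2: "B2 \<subseteq> B" for B2 p2
          using False m2 s2 by blast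
        have "?R \<in> Z"
        proof (rule ins[OF BN pP])
          show "phi p \<in> B" using php ctrB[OF BN] by simp
        next
          fix B2 p2 assume "(B2,p2) \<in> M" "B2 \<subseteq> B"
          thus "\<forall>i\<in>{1..n}. rad B \<le> v (p2 i - p i)" using new1 by blast
        next
          fix B1 p1 assume "(B1,p1) \<in> M" "B \<subseteq> B1"
          thus "\<forall>i\<in>{1..n}. rad B1 \<le> v (p i - p1 i)" using new2 by blast
        qed
      moreover have "M \<subseteq> ?R" by blast
      moreover have "?R \<noteq> M" using nB by blast
      ultimately show False using Mmax by blast
    qed
  qed
  obtain q where qA: "\<forall>i\<in>{1..n}. q i \<in> A i" and qM: "\<forall>(p,g)\<in>(\<lambda>(B,p). (p, rad B)) ` M. \<forall>i\<in>{1..n}. g \<le> v (p i - q i)"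
    using prod_point[OF vg sg sc MF1 MF2] by blast
  have qS: "phi q \<in> S" using phiS qA unfolding inP_def by blast
  have "phi q \<in> B" if BN: "B \<in> N" for B
  proof -
    obtain p where m: "(B,p) \<in> M" using full BN by blast
    have a: "rad B \<le> v (ctr B - phi p)" using M2 m memB[OF BN] by blast
    have "\<forall>i\<in>{1..n}. rad B \<le> v (p i - q i)" using qM m by fastforce
    hence b: "rad B \<le> v (phi p - phi q)" using phic by blast
    show ?thesis using memB[OF BN] qS vg_chain[OF vg a b] by blast
  qed
  thus "sum_subgrps n A \<inter> \<Inter> N \<noteq> {}" using qS unfolding S_def by blast
qed

end
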